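(* For every spherically symmetric solution $\psi$ of the wave equation, the quantity $$\partial_r\psi+\frac1M\psi$$ is conserved along $\mathcal H^+$ (i.e. its value on $\mathcal H^+$ is independent of $v$). Consequently, for generic initial data this quantity does not decay along $\mathcal H^+$.
   Context: Fix $M>0$ and let $D(r)=(1-M/r)^2$. The extreme Reissner–Nordström spacetime is described in ingoing Eddington–Finkelstein coordinates $(v,r,\theta,\phi)$, in which $g=-D\,dv^2+2\,dv\,dr+r^2g_{\mathbb S^2}$ with $g_{\mathbb S^2}$ the round metric; $\partial_v,\partial_r$ are its coordinate vector fields. The event horizon is $\mathcal H^+=\{r=M\}$ and $T=\partial_v$ is a Killing field tangent to it. $\Sigma_0$ is a connected, asymptotically flat, SO(3)-invariant spacelike hypersurface terminating at spatial infinity $i^0$ with boundary $\partial\Sigma_0=\Sigma_0\cap\mathcal H^+$, whose future unit normal $n_{\Sigma_0}$ satisfies $C_1<-g(n_{\Sigma_0},T)<C_2$ for constants $0<C_1<C_2$; $\mathcal M=\{r\ge M\}\cap J^+(\Sigma_0)$. A "solution of the wave equation" means a solution of $\Box_g\psi=0$ on $\mathcal M$ with initial data $(\psi|_{\Sigma_0},n_{\Sigma_0}\psi|_{\Sigma_0})\in H^k_{loc}(\Sigma_0)\times H^{k-1}_{loc}(\Sigma_0)$, $k\ge 2$, satisfying $\lim_{x\to i^0}r\psi^2(x)=0$; spherically symmetric means SO(3)-invariant. *)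

theory Defs
  imports "HOL-Analysis.Analysis"
begin

text \<open>Extreme Reissner-Nordstrom in ingoing Eddington-Finkelstein coordinates (v,r).
  An SO(3)-invariant function is represented as a function of (v,r).\<close>

definition ERN_D :: "real \<Rightarrow> real \<Rightarrow> real" where
  "ERN_D M r = (1 - M / r)^2"

definition pv :: "(real \<Rightarrow> real \<Rightarrow> real) \<Rightarrow> real \<Rightarrow> real \<Rightarrow> real" where
  "pv f v r = deriv (\<lambda>t. f t r) v"

definition pr :: "(real \<Rightarrow> real \<Rightarrow> real) \<Rightarrow> real \<Rightarrow> real \<Rightarrow> real" where
  "pr f v r = deriv (\<lambda>s. f v s) r"

definition C2_on :: "(real \<times> real) set \<Rightarrow> (real \<Rightarrow> real \<Rightarrow> real) \<Rightarrow> bool" where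
  "C2_on U f \<longleftrightarrow>
     (\<forall>g\<in>{f, pv f, pr f}. \<forall>(v,r)\<in>U.
        (\<lambda>t. g t r) differentiable (at v) \<and> (\<lambda>s. g v s) differentiable (at r)) \<and>
     (\<forall>g\<in>{f, pv f, pr f, pv (pv f), pv (pr f), pr (pv f), pr (pr f)}.
        continuous_on U (\<lambda>(v,r). g v r))"

text \<open>Wave operator \<open>\<box>_g\<close> of g = -D dv^2 + 2 dv dr + r^2 g_S2 acting on SO(3)-invariant
  functions: inverse metric g^vv = 0, g^vr = 1, g^rr = D, sqrt|det g| = r^2 sin theta, so
  \<open>\<box>_g \<psi> = r^-2 (\<partial>_v(r^2 \<partial>_r \<psi>) + \<partial>_r(r^2 \<partial>_v \<psi> + r^2 D \<partial>_r \<psi>))\<close>.\<close>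
definition wave_op :: "real \<Rightarrow> (real \<Rightarrow> real \<Rightarrow> real) \<Rightarrow> real \<Rightarrow> real \<Rightarrow> real" where
  "wave_op M f v r =
     (1 / r^2) * (pv (\<lambda>v r. r^2 * pr f v r) v r
                + pr (\<lambda>v r. r^2 * pv f v r + r^2 * ERN_D M r * pr f v r) v r)"

end

theory Submission
  imports Defs
begin

lemma mvt_deriv:
  fixes F :: "real \<Rightarrow> real"
  assumes "a < b" "\<And>x. a \<le> x \<Longrightarrow> x \<le> b \<Longrightarrow> F differentiable at x"
  shows "\<exists>z. a < z \<and> z < b \<and> F b - F a = (b - a) * deriv F z"
proof -
  have "continuous_on {a..b} F"
    using assms(2) by (intro continuous_at_imp_continuous_on) (auto intro: differentiable_imp_continuous_within)
  from MVT[OF assms(1) this] assms(2) obtain l z where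
    "a < z" "z < b" "DERIV F z :> l" "F b - F a = (b - a) * l" by force
  then show ?thesis using DERIV_imp_deriv by metis
qed

lemma square_lemma:
  fixes f :: "real \<Rightarrow> real \<Rightarrow> real"
  assumes h: "h > 0"
    and sq: "\<And>x y. a \<le> x \<Longrightarrow> x \<le> a + h \<Longrightarrow> b \<le> y \<Longrightarrow> y \<le> b + h \<Longrightarrow> (x, y) \<in> U"
    and d1: "\<And>x y. (x,y) \<in> U \<Longrightarrow> (\<lambda>t. f t y) differentiable (at x)"
    and d2: "\<And>x y. (x,y) \<in> U \<Longrightarrow> (\<lambda>s. f x s) differentiable (at y)"
    and d3: "\<And>x y. (x,y) \<in> U \<Longrightarrow> (\<lambda>t. pr f t y) differentiable (at x)"
    and d4: "\<And>x y. (x,y) \<in> U \<Longrightarrow> (\<lambda>s. pv f x s) differentiable (at y)"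
  shows "\<exists>\<xi> \<eta> \<xi>' \<eta>'. a < \<xi> \<and> \<xi> < a + h \<and> b < \<eta> \<and> \<eta> < b + h \<and>
          a < \<xi>' \<and> \<xi>' < a + h \<and> b < \<eta>' \<and> \<eta>' < b + h \<and>
          pr (pv f) \<xi> \<eta> = pv (pr f) \<xi>' \<eta>'"
proof -
  define g where "g t = f t (b+h) - f t b" for t
  have gd: "g differentiable at t" if "a \<le> t" "t \<le> a + h" for t
    unfolding g_def using that h sq d1 by (intro differentiable_diff) auto
  obtain \<xi> where \<xi>: "a < \<xi>" "\<xi> < a + h" "g (a+h) - g a = h * deriv g \<xi>"
    using mvt_deriv[of a "a+h" g] gd h by auto
  have "DERIV g \<xi> :> pv f \<xi> (b+h) - pv f \<xi> b"
    unfolding g_def pv_def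
    by (intro DERIV_diff[unfolded]; subst DERIV_deriv_iff_real_differentiable; rule d1; rule sq)
       (use \<xi> h in auto)
  then have g\<xi>: "deriv g \<xi> = pv f \<xi> (b+h) - pv f \<xi> b" by (rule DERIV_imp_deriv)
  obtain \<eta> where \<eta>: "b < \<eta>" "\<eta> < b + h"
      "pv f \<xi> (b+h) - pv f \<xi> b = h * deriv (\<lambda>s. pv f \<xi> s) \<eta>"
    using mvt_deriv[of b "b+h" "\<lambda>s. pv f \<xi> s"] h d4 sq \<xi> by auto
  define k where "k s = f (a+h) s - f a s" for s
  have kd: "k differentiable at s" if "b \<le> s" "s \<le> b + h" for s
    unfolding k_def using that h sq d2 by (intro differentiable_diff) auto
  obtain \<eta>' where \<eta>': "b < \<eta>'" "\<eta>' < b + h" "k (b+h) - k b = h * deriv k \<eta>'"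
    using mvt_deriv[of b "b+h" k] kd h by auto
  have "DERIV k \<eta>' :> pr f (a+h) \<eta>' - pr f a \<eta>'"
    unfolding k_def pr_def
    by (intro DERIV_diff[unfolded]; subst DERIV_deriv_iff_real_differentiable; rule d2; rule sq)
       (use \<eta>' h in auto)
  then have k\<eta>: "deriv k \<eta>' = pr f (a+h) \<eta>' - pr f a \<eta>'" by (rule DERIV_imp_deriv)
  obtain \<xi>' where \<xi>': "a < \<xi>'" "\<xi>' < a + h"
      "pr f (a+h) \<eta>' - pr f a \<eta>' = h * deriv (\<lambda>t. pr f t \<eta>') \<xi>'"
    using mvt_deriv[of a "a+h" "\<lambda>t. pr f t \<eta>'"] h d3 sq \<eta>' by auto
  have "g (a+h) - g a = k (b+h) - k b" unfolding g_def k_def by simp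
  then have "h * (h * pr (pv f) \<xi> \<eta>) = h * (h * pv (pr f) \<xi>' \<eta>')"
    using \<xi>(3) g\<xi> \<eta>(3) \<eta>'(3) k\<eta> \<xi>'(3) unfolding pr_def[of "pv f"] pv_def[of "pr f"] by simp
  then have "pr (pv f) \<xi> \<eta> = pv (pr f) \<xi>' \<eta>'" using h by simp
  then show ?thesis using \<xi> \<eta> \<xi>' \<eta>' by blast
qed


lemma schwarz:
  fixes f :: "real \<Rightarrow> real \<Rightarrow> real"
  assumes U: "open U" and ab: "(a,b) \<in> U"
    and d1: "\<And>x y. (x,y) \<in> U \<Longrightarrow> (\<lambda>t. f t y) differentiable (at x)"
    and d2: "\<And>x y. (x,y) \<in> U \<Longrightarrow> (\<lambda>s. f x s) differentiable (at y)"
    and d3: "\<And>x y. (x,y) \<in> U \<Longrightarrow> (\<lambda>t. pr f t y) differentiable (at x)"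
    and d4: "\<And>x y. (x,y) \<in> U \<Longrightarrow> (\<lambda>s. pv f x s) differentiable (at y)"
    and c1: "continuous_on U (\<lambda>(x,y). pv (pr f) x y)"
    and c2: "continuous_on U (\<lambda>(x,y). pr (pv f) x y)"
  shows "pv (pr f) a b = pr (pv f) a b"
proof (rule ccontr)
  assume ne: "pv (pr f) a b \<noteq> pr (pv f) a b"
  define \<epsilon> where "\<epsilon> = \<bar>pv (pr f) a b - pr (pv f) a b\<bar> / 2"
  have \<epsilon>: "\<epsilon> > 0" using ne unfolding \<epsilon>_def by simp
  obtain e0 where e0: "e0 > 0" "ball (a,b) e0 \<subseteq> U" using U ab open_contains_ball by blast
  obtain d1' where dd1: "d1' > 0" "\<And>p. p \<in> U \<Longrightarrow> dist p (a,b) < d1' \<Longrightarrow>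
      dist ((\<lambda>(x,y). pv (pr f) x y) p) ((\<lambda>(x,y). pv (pr f) x y) (a,b)) < \<epsilon>"
    using c1 ab \<epsilon> unfolding continuous_on_iff by meson
  obtain d2' where dd2: "d2' > 0" "\<And>p. p \<in> U \<Longrightarrow> dist p (a,b) < d2' \<Longrightarrow>
      dist ((\<lambda>(x,y). pr (pv f) x y) p) ((\<lambda>(x,y). pr (pv f) x y) (a,b)) < \<epsilon>"
    using c2 ab \<epsilon> unfolding continuous_on_iff by meson
  define h where "h = min e0 (min d1' d2') / 3"
  have h: "h > 0" using e0 dd1 dd2 unfolding h_def by simp
  have close: "dist (x,y) (a,b) < min e0 (min d1' d2')"
    if "a \<le> x" "x \<le> a + h" "b \<le> y" "y \<le> b + h" for x y
  proof -
    have "dist (x,y) (a,b) \<le> dist x a + dist y b"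
      by (simp add: dist_Pair_Pair dist_real_def sqrt_sum_squares_le_sum_abs)
    also have "\<dots> \<le> 2 * h" using that by (simp add: dist_real_def)
    also have "\<dots> < min e0 (min d1' d2')" using h e0 dd1 dd2 unfolding h_def by (simp add: min_def)
    finally show ?thesis .
  qed
  have sq: "(x, y) \<in> U" if "a \<le> x" "x \<le> a + h" "b \<le> y" "y \<le> b + h" for x y
    using close[OF that] e0(2) by (auto simp: dist_commute)
  obtain \<xi> \<eta> \<xi>' \<eta>' where pts: "a < \<xi>" "\<xi> < a + h" "b < \<eta>" "\<eta> < b + h"
      "a < \<xi>'" "\<xi>' < a + h" "b < \<eta>'" "\<eta>' < b + h"
      and eq: "pr (pv f) \<xi> \<eta> = pv (pr f) \<xi>' \<eta>'"
    using square_lemma[OF h sq d1 d2 d3 d4] by blast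
  have A: "\<bar>pv (pr f) \<xi>' \<eta>' - pv (pr f) a b\<bar> < \<epsilon>"
    using dd1(2)[of "(\<xi>',\<eta>')"] close[of \<xi>' \<eta>'] sq[of \<xi>' \<eta>'] pts by (simp add: dist_real_def)
  have B: "\<bar>pr (pv f) \<xi> \<eta> - pr (pv f) a b\<bar> < \<epsilon>"
    using dd2(2)[of "(\<xi>,\<eta>)"] close[of \<xi> \<eta>] sq[of \<xi> \<eta>] pts by (simp add: dist_real_def)
  have gen: "\<And>p q r :: real. \<bar>p - q\<bar> < \<bar>q - r\<bar> / 2 \<Longrightarrow> \<bar>p - r\<bar> < \<bar>q - r\<bar> / 2 \<Longrightarrow> False"
    by (auto simp: abs_if split: if_splits)
  show False using gen[of "pr (pv f) \<xi> \<eta>" "pv (pr f) a b" "pr (pv f) a b"] A B eq unfolding \<epsilon>_def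
    by simp
qed


lemma at_top_real_nb: "(at_top :: real filter) \<noteq> bot" by simp

lemma const_not_tendsto:
  assumes part1: "\<forall>v\<ge>v0. (H::real\<Rightarrow>real) v = H v0" and ne: "H v0 \<noteq> 0"
  shows "\<not> (H \<longlongrightarrow> 0) at_top"
proof
  assume L0: "(H \<longlongrightarrow> 0) at_top"
  have L1: "(H \<longlongrightarrow> H v0) at_top"
  proof (rule tendsto_eventually)
    show "\<forall>\<^sub>F x in at_top. H x = H v0"
      by (rule eventually_mono[OF eventually_ge_at_top[of v0]]) (rule part1[rule_format])
  qed
  have "H v0 = 0" by (rule tendsto_unique[OF at_top_real_nb L1 L0])
  then show False using ne by simp
qed

theorem proposition12p1:
  fixes M v0 :: real and \<psi> :: "real \<Rightarrow> real \<Rightarrow> real" and U :: "(real \<times> real) set"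
  assumes "M > 0"
    and "open U"
    and "\<forall>v\<ge>v0. (v, M) \<in> U"
    and "C2_on U \<psi>"
    and "\<forall>(v,r)\<in>U. r \<ge> M \<longrightarrow> wave_op M \<psi> v r = 0"
  shows "(\<forall>v\<ge>v0. pr \<psi> v M + \<psi> v M / M = pr \<psi> v0 M + \<psi> v0 M / M) \<and>
         (pr \<psi> v0 M + \<psi> v0 M / M \<noteq> 0 \<longrightarrow>
           \<not> (((\<lambda>v. pr \<psi> v M + \<psi> v M / M) \<longlongrightarrow> 0) at_top))"
proof -
  note M = assms(1)
  have d1: "\<And>x y. (x,y) \<in> U \<Longrightarrow> (\<lambda>t. \<psi> t y) differentiable (at x)"
   and d2: "\<And>x y. (x,y) \<in> U \<Longrightarrow> (\<lambda>s. \<psi> x s) differentiable (at y)"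
   and d3: "\<And>x y. (x,y) \<in> U \<Longrightarrow> (\<lambda>t. pr \<psi> t y) differentiable (at x)"
   and d4: "\<And>x y. (x,y) \<in> U \<Longrightarrow> (\<lambda>s. pv \<psi> x s) differentiable (at y)"
   and d5: "\<And>x y. (x,y) \<in> U \<Longrightarrow> (\<lambda>s. pr \<psi> x s) differentiable (at y)"
   and c1: "continuous_on U (\<lambda>(x,y). pv (pr \<psi>) x y)"
   and c2: "continuous_on U (\<lambda>(x,y). pr (pv \<psi>) x y)"
    using assms(4) unfolding C2_on_def by fastforce+
  define H where "H v = pr \<psi> v M + \<psi> v M / M" for v
  have H0: "(H has_field_derivative 0) (at v)" if v: "(v, M) \<in> U" for v
  proof -
    have sym: "pv (pr \<psi>) v M = pr (pv \<psi>) v M"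
      by (rule schwarz[OF assms(2) v d1 d2 d3 d4 c1 c2])
    have D1: "DERIV (\<lambda>t. M^2 * pr \<psi> t M) v :> M^2 * pv (pr \<psi>) v M"
      unfolding pv_def[of "pr \<psi>"]
      by (intro DERIV_cmult, subst DERIV_deriv_iff_real_differentiable, rule d3[OF v])
    have DQ: "DERIV (\<lambda>s. pv \<psi> v s) M :> pr (pv \<psi>) v M"
      unfolding pr_def[of "pv \<psi>"] using d4[OF v] DERIV_deriv_iff_real_differentiable by blast
    have DP: "DERIV (\<lambda>s. pr \<psi> v s) M :> pr (pr \<psi>) v M"
      unfolding pr_def[of "pr \<psi>"] using d5[OF v] DERIV_deriv_iff_real_differentiable by blast
    have D2: "DERIV (\<lambda>s. s^2 * pv \<psi> v s + s^2 * ERN_D M s * pr \<psi> v s) M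
               :> 2 * M * pv \<psi> v M + M^2 * pr (pv \<psi>) v M"
    proof -
      have "DERIV (\<lambda>s. s^2 * pv \<psi> v s + s^2 * (1 - M / s)^2 * pr \<psi> v s) M
               :> (2 * M * pv \<psi> v M + M^2 * pr (pv \<psi>) v M) +
                  ((2 * M * (1 - M/M)^2 + M^2 * (2 * (1 - M/M) * (M / M^2))) * pr \<psi> v M
                    + M^2 * (1 - M/M)^2 * pr (pr \<psi>) v M)"
        using M by (auto intro!: derivative_eq_intros DQ DP)
      then show ?thesis unfolding ERN_D_def using M by simp
    qed
    have "wave_op M \<psi> v M = 0" using assms(5) v by auto
    then have "(1 / M^2) * (M^2 * pv (pr \<psi>) v M + (2 * M * pv \<psi> v M + M^2 * pr (pv \<psi>) v M)) = 0"
      unfolding wave_op_def pv_def[of "\<lambda>v r. r^2 * pr \<psi> v r"]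
        pr_def[of "\<lambda>v r. r^2 * pv \<psi> v r + r^2 * ERN_D M r * pr \<psi> v r"]
      using DERIV_imp_deriv[OF D1] DERIV_imp_deriv[OF D2] by simp
    then have "(2 * M) * (M * pv (pr \<psi>) v M + pv \<psi> v M) = 0" using M sym
      by (simp add: field_simps power2_eq_square)
    then have eqn: "M * pv (pr \<psi>) v M + pv \<psi> v M = 0" using M by simp
    have DH: "DERIV H v :> pv (pr \<psi>) v M + pv \<psi> v M / M"
      unfolding H_def pv_def
    proof (rule DERIV_add)
      show "DERIV (\<lambda>t. pr \<psi> t M) v :> deriv (\<lambda>t. pr \<psi> t M) v"
        using d3[OF v] DERIV_deriv_iff_real_differentiable by blast
      have "DERIV (\<lambda>t. \<psi> t M) v :> deriv (\<lambda>t. \<psi> t M) v"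
        using d1[OF v] DERIV_deriv_iff_real_differentiable by blast
      then show "DERIV (\<lambda>t. \<psi> t M / M) v :> deriv (\<lambda>t. \<psi> t M) v / M"
        by (rule DERIV_cdivide)
    qed
    have "pv (pr \<psi>) v M + pv \<psi> v M / M = 0" using eqn M by (simp add: field_simps)
    then show ?thesis using DH by simp
  qed
  have "\<exists>c. \<forall>x\<in>{v0..}. H x = c"
  proof (rule has_field_derivative_zero_constant)
    show "convex {v0..}" by (rule convex_real_interval)
    fix x assume "x \<in> {v0..}"
    then have "(x, M) \<in> U" using assms(3) by simp
    then show "(H has_field_derivative 0) (at x within {v0..})"
      by (rule has_field_derivative_at_within[OF H0])
  qed
  then obtain c where c: "\<forall>x\<in>{v0..}. H x = c" by blast
  have part1: "\<forall>v\<ge>v0. H v = H v0"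
  proof (intro allI impI)
    fix v assume "v0 \<le> v"
    then have "H v = c" "H v0 = c" using c by auto
    then show "H v = H v0" by simp
  qed
  have part2: "H v0 \<noteq> 0 \<longrightarrow> \<not> (H \<longlongrightarrow> 0) at_top"
    using const_not_tendsto[OF part1] by blast
  have Hl: "(\<lambda>v. pr \<psi> v M + \<psi> v M / M) = H" by (simp add: H_def fun_eq_iff)
  have Hv: "\<And>v. pr \<psi> v M + \<psi> v M / M = H v" by (simp add: H_def)
  show ?thesis unfolding Hl Hv using part1 part2 by blast
qed

end
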